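(* Let $(X,d)$ be a compact metric space and $f_{0,\infty}=\{f_n\}_{n=0}^\infty$ a sequence of continuous self-maps of $X$. Let $N\ge2$ and let $V_1,\dots,V_N$ be nonempty, closed, mutually disjoint subsets of $X$ such that \[f_n(V_i)\supset\bigcup_{j=1}^{N}V_j\quad\text{for all }1\le i\le N,\ n\ge0.\] Then $h_A(f_{0,\infty})\geq\log N$ for every $A\in\mathcal{S}$.
   Context: $f_i^n=f_{i+n-1}\circ\cdots\circ f_i$ ($n\ge1$), $f_i^0=\mathrm{id}$, $f_i^{-n}(B)=(f_i^n)^{-1}(B)$. $\mathcal S$ is the set of strictly increasing sequences $A=\{a_i\}_{i\ge1}$ of nonnegative integers. For finite open covers, $\bigvee_{i=1}^n\mathscr A_i=\{\bigcap_i U_i:U_i\in\mathscr A_i\}$, $f_0^{-a}\mathscr A=\{f_0^{-a}(U):U\in\mathscr A\}$, $\mathcal N(\cdot)$ is the minimal cardinality of a subcover, and $h_A(f_{0,\infty})=\sup_{\mathscr A}\limsup_{n\to\infty}\frac1n\log\mathcal N(\bigvee_{i=1}^n f_0^{-a_i}\mathscr A)$ over finite open covers $\mathscr A$ of $X$. $\log$ is the natural logarithm. *)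

theory Defs
  imports "HOL-Analysis.Analysis" "HOL-Library.Liminf_Limsup"
begin

fun fiter :: "(nat \<Rightarrow> 'a \<Rightarrow> 'a) \<Rightarrow> nat \<Rightarrow> nat \<Rightarrow> 'a \<Rightarrow> 'a" where
  "fiter f i 0 = id"
| "fiter f i (Suc n) = f (i + n) \<circ> fiter f i n"

definition fpre :: "'a set \<Rightarrow> (nat \<Rightarrow> 'a \<Rightarrow> 'a) \<Rightarrow> nat \<Rightarrow> 'a set \<Rightarrow> 'a set" where
  "fpre X f a U = {x \<in> X. fiter f 0 a x \<in> U}"

definition fin_open_cover :: "'a::topological_space set \<Rightarrow> 'a set set \<Rightarrow> bool" where
  "fin_open_cover X C \<longleftrightarrow> finite C \<and> (\<forall>U\<in>C. openin (top_of_set X) U) \<and> \<Union>C = X"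

definition join_cover :: "'a set \<Rightarrow> (nat \<Rightarrow> 'a \<Rightarrow> 'a) \<Rightarrow> (nat \<Rightarrow> nat) \<Rightarrow> nat \<Rightarrow> 'a set set \<Rightarrow> 'a set set" where
  "join_cover X f a n C =
     {(\<Inter>i\<in>{1..n}. fpre X f (a i) (U i)) | U. \<forall>i\<in>{1..n}. U i \<in> C}"

definition ncov :: "'a set \<Rightarrow> 'a set set \<Rightarrow> nat" where
  "ncov X C = (LEAST k. \<exists>F. F \<subseteq> C \<and> finite F \<and> X \<subseteq> \<Union>F \<and> card F = k)"

definition seq_entropy :: "'a::topological_space set \<Rightarrow> (nat \<Rightarrow> 'a \<Rightarrow> 'a) \<Rightarrow> (nat \<Rightarrow> nat) \<Rightarrow> ereal" where
  "seq_entropy X f a =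
     (SUP C \<in> {C. fin_open_cover X C}.
        limsup (\<lambda>n. ereal (ln (real (ncov X (join_cover X f a n C))) / real n)))"

end

theory Submission
  imports Defs
begin

lemma fiter_Suc_left: "fiter f i (Suc t) = fiter f (Suc i) t \<circ> f i"
  by (induction t) (auto simp: fun_eq_iff)

lemma fiter_in: "(\<And>n. f n ` X \<subseteq> X) \<Longrightarrow> x \<in> X \<Longrightarrow> fiter f i t x \<in> X"
  by (induction t) auto

lemma itinerary:
  assumes "\<And>i. i \<in> {1..N} \<Longrightarrow> V i \<noteq> {}"
    and "\<And>i n. i \<in> {1..N} \<Longrightarrow> (\<Union>j\<in>{1..N}. V j) \<subseteq> f n ` V i"
  shows "(\<forall>t. c t \<in> {1..N}) \<Longrightarrow> \<exists>x\<in>V (c 0). \<forall>t\<le>T. fiter f i t x \<in> V (c t)"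
proof (induction T arbitrary: i c)
  case 0
  then show ?case using assms(1) by fastforce
next
  case (Suc T)
  from Suc.IH[of "c \<circ> Suc" "Suc i"] Suc.prems obtain y where
    y: "y \<in> V (c 1)" "\<forall>t\<le>T. fiter f (Suc i) t y \<in> V (c (Suc t))" by auto
  have "y \<in> f i ` V (c 0)" using assms(2)[of "c 0" i] Suc.prems y(1) by blast
  then obtain x where x: "x \<in> V (c 0)" "f i x = y" by blast
  have "\<forall>t\<le>Suc T. fiter f i t x \<in> V (c t)"
  proof (intro allI impI)
    fix t assume "t \<le> Suc T"
    then show "fiter f i t x \<in> V (c t)"
      using x y by (cases t) (auto simp del: fiter.simps(2) simp: fiter_Suc_left)
  qed
  then show ?case using x by blast
qed

theorem theorem3p4:
  fixes X :: "'a::metric_space set" and f :: "nat \<Rightarrow> 'a \<Rightarrow> 'a"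
    and N :: nat and V :: "nat \<Rightarrow> 'a set" and a :: "nat \<Rightarrow> nat"
  assumes "compact X"
    and "\<And>n. continuous_on X (f n)" and "\<And>n. f n ` X \<subseteq> X"
    and "N \<ge> 2"
    and "\<And>i. i \<in> {1..N} \<Longrightarrow> V i \<noteq> {} \<and> closed (V i) \<and> V i \<subseteq> X"
    and "\<And>i j. i \<in> {1..N} \<Longrightarrow> j \<in> {1..N} \<Longrightarrow> i \<noteq> j \<Longrightarrow> V i \<inter> V j = {}"
    and "\<And>i n. i \<in> {1..N} \<Longrightarrow> (\<Union>j\<in>{1..N}. V j) \<subseteq> f n ` V i"
    and "strict_mono_on {1..} a"
  shows "seq_entropy X f a \<ge> ereal (ln (real N))"
proof -
  define U where "U i = X - (\<Union>j\<in>{1..N}-{i}. V j)" for i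
  define C where "C = U ` {1..N}"
  have UV: "j = i" if "i \<in> {1..N}" "j \<in> {1..N}" "z \<in> U j" "z \<in> V i" for i j z
    using that unfolding U_def by blast
  have cov: "fin_open_cover X C"
    unfolding fin_open_cover_def
  proof (intro conjI ballI)
    show "finite C" unfolding C_def by simp
  next
    fix S assume "S \<in> C"
    then obtain i where S: "S = U i" unfolding C_def by blast
    have "closedin (top_of_set X) (\<Union>j\<in>{1..N}-{i}. V j)"
    proof (rule closed_subset)
      show "(\<Union>j\<in>{1..N}-{i}. V j) \<subseteq> X" using assms(5) by blast
      show "closed (\<Union>j\<in>{1..N}-{i}. V j)" using assms(5) by (intro closed_UN) auto
    qed
    then show "openin (top_of_set X) S" unfolding S U_def
      by (intro openin_diff) auto
  next
    show "\<Union>C = X"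
    proof
      show "\<Union>C \<subseteq> X" unfolding C_def U_def by auto
      show "X \<subseteq> \<Union>C"
      proof
        fix x assume x: "x \<in> X"
        show "x \<in> \<Union>C"
        proof (cases "\<exists>k\<in>{1..N}. x \<in> V k")
          case True
          then obtain k where k: "k \<in> {1..N}" "x \<in> V k" by blast
          have "x \<in> U k" unfolding U_def using x k assms(6)[of k] by blast
          then show ?thesis using k unfolding C_def by blast
        next
          case False
          then have "x \<in> U 1" unfolding U_def using x by blast
          then show ?thesis using assms(4) unfolding C_def by force
        qed
      qed
    qed
  qed
  have inja: "inj_on a {1..n}" for n
    using assms(8) unfolding strict_mono_on_def inj_on_def
    by (metis atLeastAtMost_iff atLeast_iff linorder_neqE_nat less_irrefl)
  have key: "real N ^ n \<le> real (ncov X (join_cover X f a n C))" for n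
  proof -
    define J where "J = join_cover X f a n C"
    let ?g = "\<lambda>W. \<Inter>i\<in>{1..n}. fpre X f (a i) (W i)"
    have finJ: "finite J"
    proof -
      have "J \<subseteq> ?g ` (PiE {1..n} (\<lambda>_. C))"
      proof
        fix S assume "S \<in> J"
        then obtain W where W: "S = ?g W" "\<forall>i\<in>{1..n}. W i \<in> C"
          unfolding J_def join_cover_def by blast
        have "S = ?g (restrict W {1..n})" using W by simp
        moreover have "restrict W {1..n} \<in> PiE {1..n} (\<lambda>_. C)" using W by auto
        ultimately show "S \<in> ?g ` (PiE {1..n} (\<lambda>_. C))" by blast
      qed
      moreover have "finite C" using cov unfolding fin_open_cover_def by blast
      ultimately show ?thesis by (meson finite_PiE finite_atLeastAtMost finite_imageI finite_subset)
    qed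
    have Jcov: "X \<subseteq> \<Union>J"
    proof
      fix x assume x: "x \<in> X"
      define W where "W i = (SOME S. S \<in> C \<and> fiter f 0 (a i) x \<in> S)" for i
      have "\<exists>S. S \<in> C \<and> fiter f 0 (a i) x \<in> S" for i
        using cov fiter_in[of f X, OF assms(3) x] unfolding fin_open_cover_def by blast
      then have W: "W i \<in> C \<and> fiter f 0 (a i) x \<in> W i" for i
        unfolding W_def by (metis (mono_tags, lifting) someI_ex)
      have "?g W \<in> J" unfolding J_def join_cover_def using W by blast
      moreover have "x \<in> ?g W" using W x unfolding fpre_def by auto
      ultimately show "x \<in> \<Union>J" by blast
    qed
    have lower: "real N ^ n \<le> real (card F)" if F: "F \<subseteq> J" "finite F" "X \<subseteq> \<Union>F" for F
    proof -
      define Wd where "Wd = PiE {1..n} (\<lambda>_. {1..N})"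
      have cardW: "card Wd = N ^ n" unfolding Wd_def by (simp add: card_PiE)
      have "\<exists>x\<in>X. \<forall>k\<in>{1..n}. fiter f 0 (a k) x \<in> V (w k)" if w: "w \<in> Wd" for w
      proof -
        define c where "c t = (if t \<in> a ` {1..n} then w (inv_into {1..n} a t) else 1)" for t
        have c: "\<forall>t. c t \<in> {1..N}"
          using w assms(4) unfolding c_def Wd_def by (auto intro!: inv_into_into)
        obtain x where x: "x \<in> V (c 0)" "\<forall>t\<le>(\<Sum>k\<in>{1..n}. a k). fiter f 0 t x \<in> V (c t)"
          using itinerary[of N V f c "\<Sum>k\<in>{1..n}. a k" 0] assms(5,7) c by blast
        have "x \<in> X" using x(1) c assms(5) by blast
        moreover have "fiter f 0 (a k) x \<in> V (w k)" if k: "k \<in> {1..n}" for k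
        proof -
          have "a k \<le> (\<Sum>k\<in>{1..n}. a k)" using k by (intro member_le_sum) auto
          then have "fiter f 0 (a k) x \<in> V (c (a k))" using x(2) by blast
          moreover have "c (a k) = w k" unfolding c_def using k inv_into_f_f[OF inja k] by auto
          ultimately show ?thesis by simp
        qed
        ultimately show ?thesis by blast
      qed
      then obtain xw where xw: "\<And>w. w \<in> Wd \<Longrightarrow> xw w \<in> X \<and> (\<forall>k\<in>{1..n}. fiter f 0 (a k) (xw w) \<in> V (w k))"
        by metis
      define gg where "gg w = (SOME S. S \<in> F \<and> xw w \<in> S)" for w
      have gg: "gg w \<in> F \<and> xw w \<in> gg w" if "w \<in> Wd" for w
      proof -
        have "\<exists>S. S \<in> F \<and> xw w \<in> S" using xw[OF that] F(3) by blast
        then show ?thesis unfolding gg_def by (metis (mono_tags, lifting) someI_ex)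
      qed
      have "inj_on gg Wd"
      proof (rule inj_onI)
        fix w v assume wv: "w \<in> Wd" "v \<in> Wd" "gg w = gg v"
        have "gg w \<in> J" using gg[OF wv(1)] F(1) by blast
        then obtain W where W: "gg w = ?g W" "\<forall>i\<in>{1..n}. W i \<in> C"
          unfolding J_def join_cover_def by blast
        have "w k = v k" if k: "k \<in> {1..n}" for k
        proof -
          obtain j where j: "j \<in> {1..N}" "W k = U j" using W(2) k unfolding C_def by blast
          have "xw w \<in> fpre X f (a k) (W k)" using gg[OF wv(1)] W(1) k by auto
          then have 1: "fiter f 0 (a k) (xw w) \<in> U j" unfolding fpre_def j by auto
          have "xw v \<in> fpre X f (a k) (W k)" using gg[OF wv(2)] wv(3) W(1) k by (metis INT_E)
          then have 2: "fiter f 0 (a k) (xw v) \<in> U j" unfolding fpre_def j by auto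
          have "w k \<in> {1..N}" "v k \<in> {1..N}" using wv k unfolding Wd_def by auto
          then show ?thesis using UV[OF _ j(1) 1] UV[OF _ j(1) 2] xw[OF wv(1)] xw[OF wv(2)] k
            by metis
        qed
        then show "w = v" using wv(1,2) unfolding Wd_def by (auto intro: PiE_ext)
      qed
      then have "card Wd \<le> card F" using gg F(2) by (intro card_inj_on_le) auto
      then show ?thesis using cardW by (metis of_nat_le_iff of_nat_power)
    qed
    have ex: "\<exists>k. \<exists>F. F \<subseteq> J \<and> finite F \<and> X \<subseteq> \<Union>F \<and> card F = k"
      using finJ Jcov by blast
    from LeastI_ex[OF ex] obtain F where "F \<subseteq> J \<and> finite F \<and> X \<subseteq> \<Union>F \<and> card F = ncov X J"
      unfolding ncov_def by blast
    then show ?thesis using lower unfolding J_def by metis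
  qed
  have "ereal (ln (real N)) \<le> limsup (\<lambda>n. ereal (ln (real (ncov X (join_cover X f a n C))) / real n))"
  proof (rule le_Limsup)
    show "sequentially \<noteq> bot" by simp
    show "\<forall>\<^sub>F n in sequentially. ereal (ln (real N)) \<le> ereal (ln (real (ncov X (join_cover X f a n C))) / real n)"
      unfolding eventually_sequentially
    proof (intro exI[of _ 1] allI impI)
      fix n :: nat assume n: "1 \<le> n"
      have pos: "0 < real N ^ n" using assms(4) by simp
      have "real n * ln (real N) = ln (real N ^ n)" by (simp add: ln_realpow)
      also have "\<dots> \<le> ln (real (ncov X (join_cover X f a n C)))"
        using key[of n] pos by (intro ln_mono) auto
      finally have "ln (real N) \<le> ln (real (ncov X (join_cover X f a n C))) / real n"
        using n by (simp add: field_simps)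
      then show "ereal (ln (real N)) \<le> ereal (ln (real (ncov X (join_cover X f a n C))) / real n)"
        by simp
    qed
  qed
  also have "\<dots> \<le> seq_entropy X f a"
    unfolding seq_entropy_def using cov by (intro SUP_upper) auto
  finally show ?thesis .
qed

end
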